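(* Consider the formal power series in $q$ \[ H(q) = \frac{2q J_{20}^{15} J_{2,20} J_{10,20}}{J_{1,20}^3 J_{3,20}^2 J_{4,20}^2 J_{5,20}^2 J_{6,20} J_{7,20}^2 J_{9,20}^3} + \sum_{n=-\infty}^{\infty} \frac{(-1)^n q^{10n^2+5n}}{1+q^{10n+2}}, \] where each summand is expanded as a power series in $q$ (for terms where $m=10n+2<0$, one writes $\frac{1}{1+q^{m}} = \frac{q^{-m}}{1+q^{-m}}$). Then every coefficient of $q^N$, $N\ge 0$, in $H(q)$ is strictly positive.
   Context: Notation: $(a;q)_\infty = \prod_{i\ge 0}(1-aq^i)$ and $(a_1,\dots,a_k;q)_\infty = (a_1;q)_\infty\cdots(a_k;q)_\infty$. For positive integers $a<b$: $J_b = (q^b;q^b)_\infty$ and $J_{a,b} = (q^a, q^{b-a}, q^b; q^b)_\infty$. *)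

theory Defs
  imports "HOL-Analysis.Analysis" "HOL-Computational_Algebra.Formal_Power_Series"
begin

text \<open>(q^a; q^d)_infinity as a formal power series in q, for a, d >= 1.
  Since every factor is 1 - q^(a+d i) with a+d i > i, the coefficient of q^N of
  the infinite product equals that of the finite product over i <= N.\<close>
definition qpoch_inf :: "nat \<Rightarrow> nat \<Rightarrow> real fps" where
  "qpoch_inf a d = Abs_fps (\<lambda>N. fps_nth (\<Prod>i\<le>N. (1 - fps_X ^ (a + d * i))) N)"

definition J :: "nat \<Rightarrow> real fps" where
  "J b = qpoch_inf b b"

definition Jab :: "nat \<Rightarrow> nat \<Rightarrow> real fps" where
  "Jab a b = qpoch_inf a b * qpoch_inf (b - a) b * qpoch_inf b b"

definition H_term :: "int \<Rightarrow> real fps" where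
  "H_term n = (let e = 10 * n^2 + 5 * n; m = 10 * n + 2 in
     if m \<ge> 0 then fps_const ((-1) powi n) * fps_X ^ nat e * inverse (1 + fps_X ^ nat m)
     else fps_const ((-1) powi n) * fps_X ^ nat (e - m) * inverse (1 + fps_X ^ nat (- m)))"

definition H_sum :: "real fps" where
  "H_sum = Abs_fps (\<lambda>N. \<Sum>\<^sub>\<infinity>n::int. fps_nth (H_term n) N)"

definition H :: "real fps" where
  "H = fps_const 2 * fps_X * J 20 ^ 15 * Jab 2 20 * Jab 10 20
       * inverse (Jab 1 20 ^ 3 * Jab 3 20 ^ 2 * Jab 4 20 ^ 2 * Jab 5 20 ^ 2 * Jab 6 20
                  * Jab 7 20 ^ 2 * Jab 9 20 ^ 3)
     + H_sum"

end

theory Submission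
  imports Defs
begin
no_notation vec_nth (infixl "$" 90)
notation fps_nth (infixl "$" 75)


definition Z :: "nat \<Rightarrow> real fps \<Rightarrow> bool" where
  "Z n h \<longleftrightarrow> (\<forall>k<n. h $ k = 0)"

lemma Z_mult_left: "Z n h \<Longrightarrow> Z n (a * h)"
  unfolding Z_def by (auto simp: fps_mult_nth intro!: sum.neutral)

lemma Z_mult_right: "Z n h \<Longrightarrow> Z n (h * a)"
  using Z_mult_left[of n h a] by (simp add: mult.commute)

lemma Z_add: "Z n a \<Longrightarrow> Z n b \<Longrightarrow> Z n (a + b)"
  unfolding Z_def by auto

lemma Z_diff: "Z n a \<Longrightarrow> Z n b \<Longrightarrow> Z n (a - b)"
  unfolding Z_def by auto

lemma Z_0: "Z n 0" unfolding Z_def by auto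

definition eqm :: "nat \<Rightarrow> real fps \<Rightarrow> real fps \<Rightarrow> bool" where
  "eqm n f g \<longleftrightarrow> Z n (f - g)"

lemma eqm_refl: "eqm n f f" by (simp add: eqm_def Z_0)

lemma eqm_sym: "eqm n f g \<Longrightarrow> eqm n g f"
  unfolding eqm_def Z_def by auto

lemma eqm_trans: "eqm n f g \<Longrightarrow> eqm n g h \<Longrightarrow> eqm n f h"
  unfolding eqm_def Z_def by auto

lemma eqm_nth: "eqm n f g \<Longrightarrow> k < n \<Longrightarrow> f $ k = g $ k"
  unfolding eqm_def Z_def by auto

lemma eqm_mult: "eqm n f f' \<Longrightarrow> eqm n g g' \<Longrightarrow> eqm n (f * g) (f' * g')"
proof -
  assume a: "eqm n f f'" "eqm n g g'"
  have "f * g - f' * g' = f * (g - g') + (f - f') * g'" by (simp add: algebra_simps)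
  thus ?thesis using a unfolding eqm_def by (metis Z_add Z_mult_left Z_mult_right)
qed

lemma eqm_add: "eqm n f f' \<Longrightarrow> eqm n g g' \<Longrightarrow> eqm n (f + g) (f' + g')"
  unfolding eqm_def Z_def by auto

lemma eqm_power: "eqm n f f' \<Longrightarrow> eqm n (f ^ k) (f' ^ k)"
  by (induction k) (auto intro: eqm_mult eqm_refl)

lemma eqm_inverse:
  assumes "eqm n f g" "n > 0" "f $ 0 \<noteq> 0"
  shows "eqm n (inverse f) (inverse g)"
proof -
  have g0: "g $ 0 \<noteq> 0" using eqm_nth[OF assms(1) assms(2)] assms(3) by simp
  have "inverse f - inverse g = inverse f * inverse g * (g - f)"
  proof -
    have "inverse f * inverse g * (g - f) = inverse f * (inverse g * g) - inverse g * (inverse f * f)"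
      by (simp add: algebra_simps)
    also have "\<dots> = inverse f - inverse g"
      using inverse_mult_eq_1[OF g0] inverse_mult_eq_1[OF assms(3)] by simp
    finally show ?thesis by simp
  qed
  moreover have "Z n (g - f)" using assms(1) unfolding eqm_def Z_def by auto
  ultimately show ?thesis unfolding eqm_def by (metis Z_mult_left)
qed


definition qf :: "nat \<Rightarrow> nat \<Rightarrow> nat \<Rightarrow> real fps" where
  "qf a d L = (\<Prod>i<L. 1 - fps_X ^ (a + d * i))"

lemma prod_split_add: "(\<Prod>i<m+n. f i) = (\<Prod>i<m. f i) * (\<Prod>i<n. f (m + i))"
  for f :: "nat \<Rightarrow> 'a::comm_monoid_mult"
  by (induction n) (simp_all add: mult.assoc)

lemma eqm_one_minus_X: "n \<le> e \<Longrightarrow> eqm n (1 - fps_X ^ e) 1"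
  unfolding eqm_def Z_def by (auto simp: fps_X_power_nth)

lemma eqm_prod_one:
  shows "(\<forall>i<(L::nat). n \<le> e i) \<Longrightarrow> eqm n (\<Prod>i<L. 1 - fps_X ^ e i) 1"
proof (induction L)
  case 0 then show ?case by (simp add: eqm_refl)
next
  case (Suc L)
  have "eqm n ((\<Prod>i<L. 1 - fps_X ^ e i) * (1 - fps_X ^ e L)) (1 * 1)"
    using Suc by (intro eqm_mult eqm_one_minus_X) auto
  then show ?case by simp
qed

lemma qpoch_trunc:
  assumes "d \<ge> 1" "L \<ge> n"
  shows "eqm n (qpoch_inf a d) (qf a d L)"
  unfolding eqm_def Z_def
proof (intro allI impI)
  fix k assume k: "k < n"
  define T where "T = (\<Prod>i<L - Suc k. (1::real fps) - fps_X ^ (a + d * (Suc k + i)))"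
  have split: "qf a d L = qf a d (Suc k) * T"
    unfolding qf_def T_def using prod_split_add[of "\<lambda>i. (1::real fps) - fps_X ^ (a + d * i)" "Suc k" "L - Suc k"]
      k assms by simp
  have "eqm (Suc k) T 1" unfolding T_def
  proof (rule eqm_prod_one, intro allI impI)
    fix i assume "i < L - Suc k" show "Suc k \<le> a + d * (Suc k + i)"
      using assms(1) by (metis le_add2 mult_le_mono1 mult_1 add.commute le_add1 le_trans trans_le_add2)
  qed
  hence "eqm (Suc k) (qf a d (Suc k) * T) (qf a d (Suc k) * 1)" by (intro eqm_mult eqm_refl)
  hence "qf a d L $ k = qf a d (Suc k) $ k" using split eqm_nth by fastforce
  moreover have "qpoch_inf a d $ k = qf a d (Suc k) $ k"
    unfolding qpoch_inf_def qf_def by (simp add: lessThan_Suc_atMost)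
  ultimately show "(qpoch_inf a d - qf a d L) $ k = 0" by simp
qed


definition u :: "nat \<Rightarrow> real fps" where "u m = 1 - fps_X ^ m"
definition w :: "nat \<Rightarrow> real fps" where "w m = inverse (1 - fps_X ^ m)"

definition good :: "real fps \<Rightarrow> bool" where
  "good f \<longleftrightarrow> (\<forall>n. 0 \<le> f $ n) \<and> f $ 0 = 1"

lemma good_one: "good 1" unfolding good_def by auto

lemma good_mult: "good f \<Longrightarrow> good g \<Longrightarrow> good (f * g)"
  unfolding good_def by (auto simp: fps_mult_nth intro!: sum_nonneg)

lemma good_power: "good f \<Longrightarrow> good (f ^ k)"
  by (induction k) (auto intro: good_mult good_one)

lemma good_prod: "(\<forall>i<(L::nat). good (f i)) \<Longrightarrow> good (\<Prod>i<L. f i)"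
  by (induction L) (auto intro: good_mult good_one)

lemma w_nth: assumes "m \<ge> 1" shows "w m $ n = (if m dvd n then 1 else 0)"
proof -
  define g :: "real fps" where "g = Abs_fps (\<lambda>n. if m dvd n then 1 else 0)"
  have "(1 - fps_X ^ m) * g = 1"
  proof (rule fps_ext)
    fix n
    have "((1 - fps_X ^ m) * g) $ n = g $ n - (fps_X ^ m * g) $ n" by (simp add: algebra_simps)
    also have "\<dots> = (1::real fps) $ n"
    proof (cases "n = 0")
      case True then show ?thesis using assms by (simp add: g_def fps_X_power_mult_nth)
    next
      case False
      show ?thesis
      proof (cases "n < m")
        case True
        then have "\<not> m dvd n" using False by (auto dest: dvd_imp_le)
        then show ?thesis using True False by (simp add: g_def fps_X_power_mult_nth)
      next
        case f2: False
        have "m dvd n \<longleftrightarrow> m dvd (n - m)" using f2 by (simp add: dvd_minus_self)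
        then show ?thesis using False f2 by (simp add: g_def fps_X_power_mult_nth)
      qed
    qed
    finally show "((1 - fps_X ^ m) * g) $ n = (1::real fps) $ n" .
  qed
  hence "w m = g" unfolding w_def by (rule fps_inverse_unique)
  thus ?thesis by (simp add: g_def)
qed

lemma good_w: "m \<ge> 1 \<Longrightarrow> good (w m)"
  unfolding good_def by (simp add: w_nth)

lemma u_w: "m \<ge> 1 \<Longrightarrow> u m * w m = 1"
  unfolding u_def w_def by (rule inverse_mult_eq_1') simp

lemma good_C: assumes "m \<ge> 1" shows "good (u (2 * m) * w m)"
proof -
  have "u (2 * m) = u m * (1 + fps_X ^ m)" unfolding u_def
    by (simp add: algebra_simps power_add[symmetric] mult_2)
  hence "u (2 * m) * w m = (1 + fps_X ^ m) * (u m * w m)" by (simp add: ac_simps)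
  also have "\<dots> = 1 + fps_X ^ m" using u_w[OF assms] by simp
  finally show ?thesis unfolding good_def using assms by auto
qed

lemma good_B: assumes "a \<ge> 1" "b \<ge> 1" shows "good (u (a + b) * w a * w b)"
proof -
  have "u (a + b) = u b + fps_X ^ b * u a" unfolding u_def
    by (simp add: algebra_simps power_add)
  hence "u (a + b) * w a * w b = (u b * w b) * w a + fps_X ^ b * w b * (u a * w a)"
    by (simp add: algebra_simps)
  also have "\<dots> = w a + fps_X ^ b * w b" using u_w assms by simp
  finally have e: "u (a + b) * w a * w b = w a + fps_X ^ b * w b" .
  show ?thesis unfolding e good_def using assms
    by (auto simp: w_nth fps_X_power_mult_nth)
qed

lemma w1_good_ge1: assumes "good G" shows "(w 1 * G) $ k \<ge> 1"
proof -
  have "(w 1 * G) $ k = (\<Sum>i=0..k. G $ (k - i))" by (simp add: fps_mult_nth w_nth)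
  also have "\<dots> \<ge> G $ (k - k)"
    by (rule member_le_sum) (use assms in \<open>auto simp: good_def\<close>)
  finally show ?thesis using assms by (simp add: good_def)
qed

lemma w1_ge: assumes "\<forall>k. F $ k \<ge> 1" shows "(w 1 * F) $ k \<ge> real k + 1"
proof -
  have "(w 1 * F) $ k = (\<Sum>i=0..k. F $ (k - i))" by (simp add: fps_mult_nth w_nth)
  also have "\<dots> \<ge> (\<Sum>i=0..k. 1)" by (rule sum_mono) (use assms in auto)
  finally show ?thesis by simp
qed

lemma w1w1_good: "good G \<Longrightarrow> (w 1 * (w 1 * G)) $ k \<ge> real k + 1"
  using w1_ge w1_good_ge1 by blast


definition Qn :: "nat \<Rightarrow> nat \<Rightarrow> real fps" where "Qn K c = (\<Prod>i<2*K. u (c + 20 * i))"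
definition iQ :: "nat \<Rightarrow> nat \<Rightarrow> real fps" where "iQ K a = (\<Prod>i<2*K. w (a + 20 * i))"
definition NU :: "nat \<Rightarrow> nat \<Rightarrow> real fps" where "NU K c = (\<Prod>j<K. u (c + 40 * j))"
definition HW :: "nat \<Rightarrow> nat \<Rightarrow> real fps" where "HW K a = (\<Prod>j<K. w (a + 20 * j))"
definition TW :: "nat \<Rightarrow> nat \<Rightarrow> real fps" where "TW K a = (\<Prod>j<K. w (a + 20 * (K + j)))"
definition HS :: "nat \<Rightarrow> nat \<Rightarrow> real fps" where "HS K a = (\<Prod>j<K. w (a + 20 + 20 * j))"
definition TS :: "nat \<Rightarrow> nat \<Rightarrow> real fps" where "TS K a = (\<Prod>j<K - 1. w (a + 20 * (K + 1 + j)))"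
definition R1 :: "nat \<Rightarrow> real fps" where "R1 K = (\<Prod>j<2*K - 1. w (21 + 20 * j))"

lemma prod_even_odd: "(\<Prod>i<2*K. f i) = (\<Prod>j<K. f (2*j) * f (2*j+1))"
  for f :: "nat \<Rightarrow> 'a::comm_monoid_mult"
  by (induction K) (simp_all add: ac_simps)

lemma Qn_split: "Qn K c = NU K c * NU K (c + 20)"
  unfolding Qn_def NU_def prod_even_odd prod.distrib
  by (simp add: algebra_simps)

lemma iQ_split: "iQ K a = HW K a * TW K a"
  unfolding iQ_def HW_def TW_def using prod_split_add[of "\<lambda>i. w (a + 20 * i)" K K]
  by (simp add: mult_2)

lemma iQ_shift: assumes "K \<ge> 1" shows "iQ K a = w a * HS K a * TS K a"
proof -
  have "iQ K a = (\<Prod>i<Suc K. w (a + 20 * i)) * (\<Prod>j<K - 1. w (a + 20 * (Suc K + j)))"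
    unfolding iQ_def using prod_split_add[of "\<lambda>i. w (a + 20 * i)" "Suc K" "K - 1"] assms
    by (simp add: mult_2)
  also have "(\<Prod>i<Suc K. w (a + 20 * i)) = w a * HS K a"
    unfolding HS_def prod.lessThan_Suc_shift by (simp add: algebra_simps)
  finally show ?thesis unfolding TS_def by (simp add: algebra_simps)
qed

lemma iQ1_split: assumes "K \<ge> 1" shows "iQ K 1 = w 1 * R1 K"
proof -
  have e: "2 * K = Suc (2 * K - 1)" using assms by simp
  show ?thesis unfolding iQ_def R1_def
    by (subst e, subst prod.lessThan_Suc_shift) (simp add: algebra_simps)
qed

lemma good_prod_w: "(\<forall>j<(n::nat). f j \<ge> 1) \<Longrightarrow> good (\<Prod>j<n. w (f j))"
  using good_prod[of n "\<lambda>j. w (f j)"] good_w by auto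

lemma good_atoms:
  assumes "a \<ge> 1"
  shows "good (iQ K a)" "good (HW K a)" "good (TW K a)" "good (HS K a)" "good (TS K a)" "good (R1 K)"
  "good (w a)"
  unfolding iQ_def HW_def TW_def HS_def TS_def R1_def using assms
  by (auto intro!: good_prod_w good_w)


definition AK :: "nat \<Rightarrow> real fps" where
  "AK K = Qn K 2 * Qn K 18 * Qn K 10 * Qn K 10 * Qn K 20 * Qn K 20 *
     iQ K 1 ^ 3 * iQ K 19 ^ 3 * iQ K 3 ^ 2 * iQ K 17 ^ 2 * iQ K 4 ^ 2 * iQ K 16 ^ 2 *
     iQ K 5 ^ 2 * iQ K 15 ^ 2 * iQ K 6 * iQ K 14 * iQ K 7 ^ 2 * iQ K 13 ^ 2 * iQ K 9 ^ 3 * iQ K 11 ^ 3"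

definition gj :: "nat \<Rightarrow> real fps" where
  "gj j = (u (2 + 40 * j) * w (1 + 20 * j)) * (u (2 + 20 + 40 * j) * w (11 + 20 * j)) *
     (u (18 + 40 * j) * w (9 + 20 * j)) * (u (18 + 20 + 40 * j) * w (19 + 20 * j)) *
     (u (10 + 40 * j) * w (5 + 20 * j)) * (u (10 + 40 * j) * w (5 + 20 * j)) *
     (u (10 + 20 + 40 * j) * w (15 + 20 * j)) * (u (10 + 20 + 40 * j) * w (15 + 20 * j)) *
     (u (20 + 40 * j) * w (3 + 20 * j) * w (17 + 20 * j)) *
     (u (20 + 20 + 40 * j) * w (7 + 20 * j) * w (13 + 20 + 20 * j)) *
     (u (20 + 40 * j) * w (9 + 20 * j) * w (11 + 20 * j)) *
     (u (20 + 20 + 40 * j) * w (4 + 20 * j) * w (16 + 20 + 20 * j))"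

lemma good_gj: "good (gj j)"
proof -
  have C: "good (u (2 * m) * w m)" if "m \<ge> 1" for m using good_C that by blast
  have B: "good (u (a + b) * w a * w b)" if "a \<ge> 1" "b \<ge> 1" for a b using good_B that by blast
  have c1: "good (u (2 + 40 * j) * w (1 + 20 * j))" using C[of "1 + 20 * j"] by (simp add: algebra_simps)
  have c2: "good (u (2 + 20 + 40 * j) * w (11 + 20 * j))" using C[of "11 + 20 * j"] by (simp add: algebra_simps)
  have c3: "good (u (18 + 40 * j) * w (9 + 20 * j))" using C[of "9 + 20 * j"] by (simp add: algebra_simps)
  have c4: "good (u (18 + 20 + 40 * j) * w (19 + 20 * j))" using C[of "19 + 20 * j"] by (simp add: algebra_simps)
  have c5: "good (u (10 + 40 * j) * w (5 + 20 * j))" using C[of "5 + 20 * j"] by (simp add: algebra_simps)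
  have c6: "good (u (10 + 20 + 40 * j) * w (15 + 20 * j))" using C[of "15 + 20 * j"] by (simp add: algebra_simps)
  have b1: "good (u (20 + 40 * j) * w (3 + 20 * j) * w (17 + 20 * j))"
    using B[of "3 + 20 * j" "17 + 20 * j"] by (simp add: algebra_simps)
  have b2: "good (u (20 + 20 + 40 * j) * w (7 + 20 * j) * w (13 + 20 + 20 * j))"
    using B[of "7 + 20 * j" "13 + 20 + 20 * j"] by (simp add: algebra_simps)
  have b3: "good (u (20 + 40 * j) * w (9 + 20 * j) * w (11 + 20 * j))"
    using B[of "9 + 20 * j" "11 + 20 * j"] by (simp add: algebra_simps)
  have b4: "good (u (20 + 20 + 40 * j) * w (4 + 20 * j) * w (16 + 20 + 20 * j))"
    using B[of "4 + 20 * j" "16 + 20 + 20 * j"] by (simp add: algebra_simps)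
  show ?thesis unfolding gj_def
    by (intro good_mult c1 c2 c3 c4 c5 c6 b1 b2 b3 b4)
qed

lemma prod_gj: "(\<Prod>j<K. gj j) =
   NU K 2 * NU K (2 + 20) * NU K 18 * NU K (18 + 20) * NU K 10 * NU K 10 * NU K (10 + 20) * NU K (10 + 20) *
   NU K 20 * NU K (20 + 20) * NU K 20 * NU K (20 + 20) *
   HW K 1 * HW K 11 * HW K 11 * HW K 9 * HW K 9 * HW K 19 * HW K 5 * HW K 5 * HW K 15 * HW K 15 *
   HW K 3 * HW K 17 * HW K 7 * HS K 13 * HW K 4 * HS K 16"
  unfolding gj_def NU_def HW_def HS_def prod.distrib by (simp only: ac_simps)


definition Rest0 :: "nat \<Rightarrow> real fps" where
  "Rest0 K = TW K 1 * TW K 11 * TW K 11 * TW K 9 * TW K 9 * TW K 19 * TW K 5 * TW K 5 *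
     TW K 15 * TW K 15 * TW K 3 * TW K 17 * TW K 7 * TW K 4 * w 13 * TS K 13 * w 16 * TS K 16 *
     iQ K 19 * iQ K 19 * iQ K 3 * iQ K 17 * iQ K 4 * iQ K 16 * iQ K 6 * iQ K 14 * iQ K 7 *
     iQ K 13 * iQ K 9 * iQ K 11"

lemma AK_eq1: assumes "K \<ge> 1"
  shows "AK K = (\<Prod>j<K. gj j) * Rest0 K * iQ K 1 * iQ K 1"
proof -
  note s13 = iQ_shift[OF assms, of 13] and s16 = iQ_shift[OF assms, of 16]
  show ?thesis
    unfolding AK_def prod_gj Rest0_def Qn_split power3_eq_cube power2_eq_square s13 s16
    by (simp only: iQ_split ac_simps)
qed

lemma AK_eq: assumes "K \<ge> 1"
  shows "AK K = w 1 * (w 1 * ((\<Prod>j<K. gj j) * Rest0 K * R1 K * R1 K))"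
  unfolding AK_eq1[OF assms] iQ1_split[OF assms] by (simp only: ac_simps)

lemma good_G: "good ((\<Prod>j<K. gj j) * Rest0 K * R1 K * R1 K)"
proof -
  have "good (\<Prod>j<K. gj j)" by (rule good_prod) (simp add: good_gj)
  then show ?thesis unfolding Rest0_def
    by (intro good_mult; simp add: good_atoms good_atoms(6)[of 1])
qed

lemma AK_coeff: "K \<ge> 1 \<Longrightarrow> AK K $ k \<ge> real k + 1"
  using AK_eq w1w1_good good_G by metis


lemma prod_nth0: "(\<Prod>i<(n::nat). f i) $ 0 = (\<Prod>i<n. f i $ 0)"
  by (induction n) simp_all

lemma inverse_prod_fps: "inverse (\<Prod>i<(n::nat). f i :: real fps) = (\<Prod>i<n. inverse (f i))"
  by (induction n) (simp_all add: fps_inverse_mult)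

lemma inverse_power_fps: "inverse ((f :: real fps) ^ n) = inverse f ^ n"
  by (induction n) (simp_all add: fps_inverse_mult)

lemma inv_Qn: "inverse (Qn K a) = iQ K a"
  unfolding Qn_def iQ_def inverse_prod_fps u_def w_def ..

lemma Qn_nth0: "Qn K a $ 0 = 1" if "a \<ge> 1"
  unfolding Qn_def prod_nth0 u_def using that by (auto intro!: prod.neutral)

lemma Q20_iQ20: "Qn K 20 * iQ K 20 = 1"
  unfolding inv_Qn[symmetric] by (rule inverse_mult_eq_1') (simp add: Qn_nth0)

definition Ptr :: "nat \<Rightarrow> real fps" where
  "Ptr K = fps_const 2 * fps_X * Qn K 20 ^ 15 * (Qn K 2 * Qn K 18 * Qn K 20) * (Qn K 10 * Qn K 10 * Qn K 20)
    * inverse ((Qn K 1 * Qn K 19 * Qn K 20) ^ 3 * (Qn K 3 * Qn K 17 * Qn K 20) ^ 2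
      * (Qn K 4 * Qn K 16 * Qn K 20) ^ 2 * (Qn K 5 * Qn K 15 * Qn K 20) ^ 2 * (Qn K 6 * Qn K 14 * Qn K 20)
      * (Qn K 7 * Qn K 13 * Qn K 20) ^ 2 * (Qn K 9 * Qn K 11 * Qn K 20) ^ 3)"

lemma Ptr_eq: "Ptr K = fps_const 2 * fps_X * AK K"
proof -
  have c: "Qn K 20 * iQ K 20 = 1" by (rule Q20_iQ20)
  show ?thesis using c unfolding Ptr_def AK_def fps_inverse_mult inverse_power_fps inv_Qn
    by algebra
qed


lemma invp_nth: assumes "m \<ge> 1"
  shows "inverse (1 + fps_X ^ m :: real fps) $ k = (if m dvd k then (-1) ^ (k div m) else 0)"
proof -
  define g :: "real fps" where "g = Abs_fps (\<lambda>k. if m dvd k then (-1) ^ (k div m) else 0)"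
  have "(1 + fps_X ^ m) * g = 1"
  proof (rule fps_ext)
    fix n
    have "((1 + fps_X ^ m) * g) $ n = g $ n + (fps_X ^ m * g) $ n" by (simp add: algebra_simps)
    also have "\<dots> = (1::real fps) $ n"
    proof (cases "n = 0")
      case True then show ?thesis using assms by (simp add: g_def fps_X_power_mult_nth)
    next
      case False
      show ?thesis
      proof (cases "n < m")
        case True
        then have "\<not> m dvd n" using False by (auto dest: dvd_imp_le)
        then show ?thesis using True False by (simp add: g_def fps_X_power_mult_nth)
      next
        case f2: False
        have d: "m dvd n \<longleftrightarrow> m dvd (n - m)" using f2 by (simp add: dvd_minus_self)
        have "n div m = Suc ((n - m) div m)" if dv: "m dvd n"
        proof -
          obtain q where q: "n = m * q" using dv by auto
          have "q \<ge> 1" using q f2 assms by (cases q) auto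
          have "n - m = m * (q - 1)" using q by (simp add: diff_mult_distrib2)
          then show ?thesis using q assms \<open>q \<ge> 1\<close> by simp
        qed
        then show ?thesis using False f2 d by (auto simp: g_def fps_X_power_mult_nth)
      qed
    qed
    finally show "((1 + fps_X ^ m) * g) $ n = (1::real fps) $ n" .
  qed
  hence "inverse (1 + fps_X ^ m) = g" by (rule fps_inverse_unique)
  thus ?thesis by (simp add: g_def)
qed

lemma abs_invp_nth: "m \<ge> 1 \<Longrightarrow> \<bar>inverse (1 + fps_X ^ m :: real fps) $ k\<bar> \<le> 1"
  by (simp add: invp_nth)

lemma abs_m1_powi: "\<bar>(-1::real) powi n\<bar> = 1"
  by (simp add: power_int_abs)


definition HE :: "int \<Rightarrow> nat" where
  "HE n = (if 10 * n + 2 \<ge> 0 then nat (10 * n^2 + 5 * n) else nat (10 * n^2 + 5 * n - (10 * n + 2)))"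

lemma H_term_form: "\<exists>M\<ge>1. H_term n = fps_const ((-1) powi n) * fps_X ^ HE n * inverse (1 + fps_X ^ M)"
proof (cases "10 * n + 2 \<ge> 0")
  case True
  then have "10 * n + 2 \<ge> 2" by presburger
  then show ?thesis unfolding H_term_def HE_def Let_def
    by (intro exI[of _ "nat (10 * n + 2)"]) auto
next
  case False
  then show ?thesis unfolding H_term_def HE_def Let_def
    by (intro exI[of _ "nat (- (10 * n + 2))"]) auto
qed

lemma coeff_form: "(fps_const c * fps_X ^ E * V) $ N = c * (if N < E then 0 else V $ (N - E))"
  by (simp add: mult.assoc fps_X_power_mult_nth)

lemma H_term_abs: "\<bar>H_term n $ N\<bar> \<le> 1"
proof -
  obtain M where M: "M \<ge> 1" "H_term n = fps_const ((-1) powi n) * fps_X ^ HE n * inverse (1 + fps_X ^ M)"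
    using H_term_form by blast
  show ?thesis unfolding M(2) coeff_form
    using abs_invp_nth[OF M(1)] by (simp add: abs_mult abs_m1_powi)
qed

lemma HE_big: assumes "int (N div 13) < \<bar>n\<bar>" shows "N < HE n"
proof (cases "n \<ge> 0")
  case True
  then have n1: "n \<ge> int (N div 13) + 1" using assms by simp
  have "n * n \<ge> 1 * n" using n1 by (intro mult_right_mono) auto
  then have "13 * n \<le> 10 * n^2 + 5 * n" using n1 by (simp add: power2_eq_square)
  moreover have "int N < 13 * (int (N div 13) + 1)" by presburger
  ultimately show ?thesis unfolding HE_def using True n1 by auto
next
  case False
  then have n1: "- n \<ge> int (N div 13) + 1" using assms by simp
  have "(-n) * (-n) \<ge> 1 * (-n)" using n1 by (intro mult_right_mono) auto
  then have "13 * (- n) \<le> 10 * n^2 + 5 * n - (10 * n + 2)" using n1 by (simp add: power2_eq_square)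
  moreover have "int N < 13 * (int (N div 13) + 1)" by presburger
  ultimately show ?thesis unfolding HE_def using False n1 by auto
qed

lemma H_term_zero: "int (N div 13) < \<bar>n\<bar> \<Longrightarrow> H_term n $ N = 0"
proof -
  assume a: "int (N div 13) < \<bar>n\<bar>"
  obtain M where M: "M \<ge> 1" "H_term n = fps_const ((-1) powi n) * fps_X ^ HE n * inverse (1 + fps_X ^ M)"
    using H_term_form by blast
  show ?thesis unfolding M(2) coeff_form using HE_big[OF a] by simp
qed

lemma H_term_00: "H_term 0 $ 0 = 1"
  unfolding H_term_def by (simp add: invp_nth)

lemma H_sum_eq: "H_sum $ N = (\<Sum>n\<in>{- int (N div 13)..int (N div 13)}. H_term n $ N)"
proof -
  have "H_sum $ N = (\<Sum>\<^sub>\<infinity>n::int. H_term n $ N)" unfolding H_sum_def by simp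
  also have "\<dots> = (\<Sum>\<^sub>\<infinity>n\<in>{- int (N div 13)..int (N div 13)}. H_term n $ N)"
    by (rule infsum_cong_neutral) (auto intro!: H_term_zero)
  also have "\<dots> = (\<Sum>n\<in>{- int (N div 13)..int (N div 13)}. H_term n $ N)" by simp
  finally show ?thesis .
qed

lemma H_sum_ge: "H_sum $ N \<ge> - (2 * real (N div 13) + 1)"
proof -
  have "\<bar>H_sum $ N\<bar> \<le> (\<Sum>n\<in>{- int (N div 13)..int (N div 13)}. \<bar>H_term n $ N\<bar>)"
    unfolding H_sum_eq by (rule sum_abs)
  also have "\<dots> \<le> (\<Sum>n\<in>{- int (N div 13)..int (N div 13)}. 1)" by (intro sum_mono H_term_abs)
  also have "\<dots> = 2 * real (N div 13) + 1" by simp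
  finally show ?thesis by linarith
qed

lemma H_sum_0: "H_sum $ 0 = 1"
  unfolding H_sum_eq by (simp add: H_term_00)


lemma eqm_inverse': "eqm n g f \<Longrightarrow> 0 < n \<Longrightarrow> f $ 0 \<noteq> 0 \<Longrightarrow> eqm n (inverse g) (inverse f)"
  using eqm_inverse eqm_sym by blast

lemma qpoch_Qn: "n \<le> 2 * K \<Longrightarrow> eqm n (qpoch_inf a 20) (Qn K a)"
  using qpoch_trunc[of 20 n "2 * K" a] unfolding qf_def Qn_def u_def by simp

lemma Jab20: "a + b = 20 \<Longrightarrow> Jab a 20 = qpoch_inf a 20 * qpoch_inf b 20 * qpoch_inf 20 20"
  unfolding Jab_def by (metis add_diff_cancel_left')

lemma eqm_Jab: "n \<le> 2 * K \<Longrightarrow> a + b = 20 \<Longrightarrow> eqm n (Jab a 20) (Qn K a * Qn K b * Qn K 20)"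
  unfolding Jab20 by (intro eqm_mult qpoch_Qn)

lemma eqm_J: "n \<le> 2 * K \<Longrightarrow> eqm n (J 20) (Qn K 20)"
  unfolding J_def by (rule qpoch_Qn)

definition Pex :: "real fps" where
  "Pex = fps_const 2 * fps_X * J 20 ^ 15 * Jab 2 20 * Jab 10 20
       * inverse (Jab 1 20 ^ 3 * Jab 3 20 ^ 2 * Jab 4 20 ^ 2 * Jab 5 20 ^ 2 * Jab 6 20
                  * Jab 7 20 ^ 2 * Jab 9 20 ^ 3)"

lemma H_split: "H = Pex + H_sum" unfolding H_def Pex_def ..

lemma eqm_Pex: assumes "0 < n" "n \<le> 2 * K" shows "eqm n Pex (Ptr K)"
  unfolding Pex_def Ptr_def
  apply (intro eqm_mult eqm_power eqm_J eqm_Jab eqm_inverse' assms eqm_refl)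
  apply (simp_all add: Qn_nth0 fps_nth_power_0)
  done

theorem mainTheorem6:
  shows "\<forall>N. fps_nth H N > 0"
proof
  fix N :: nat
  define K where "K = Suc N"
  have "eqm (Suc N) Pex (Ptr K)" by (rule eqm_Pex) (auto simp: K_def)
  hence e1: "Pex $ N = Ptr K $ N" by (rule eqm_nth) simp
  have HN: "H $ N = Ptr K $ N + H_sum $ N" unfolding H_split using e1 by simp
  show "H $ N > 0"
  proof (cases N)
    case 0
    then show ?thesis using HN H_sum_0 by (simp add: Ptr_eq)
  next
    case (Suc M)
    have "AK K $ M \<ge> real M + 1" by (rule AK_coeff) (simp add: K_def)
    hence p: "Ptr K $ N \<ge> 2 * real N" unfolding Ptr_eq using Suc by (simp add: mult.assoc fps_X_mult_nth)
    have "N div 13 < N" using Suc by simp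
    hence "real (N div 13) + 1 \<le> real N" by linarith
    then show ?thesis using HN p H_sum_ge[of N] by linarith
  qed
qed

end
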